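(* There exists a constant $r_{m,1}>0$ depending only on $m$ such that for $P$-a.e. $\omega$ there exists $N_2(\omega)\in\mathbb N$ such that for every $n>N_2(\omega)$, $C_{Q_n(\omega)}\subset[-r_{m,1},r_{m,1}]$.
   Context: Fix $m>1/2$. Let $c_m:=\left(\int_{\mathbb R}(1+x^2)^{-m}dx\right)^{-1}$ and let $\nu_m(dx):=c_m(1+x^2)^{-m}dx$ (the Pearson Type VII law $\mathrm{PVII}_m(0,1)$). Let $(X_n)_{n\ge1}$ be i.i.d. random variables on $(\Omega,\mathcal F,P)$ with law $\nu_m$. For $t\in\mathbb R$ let $L_n(t):=\frac1n\sum_{i=1}^n\log(1+(X_i-t)^2)$. Let $Q_n(\omega):=\frac1n\sum_{i=1}^n\delta_{X_i(\omega)}$ be the empirical distribution and $C_{Q_n(\omega)}:=\{t\in\mathbb R: L_n(t)(\omega)=\min_{s\in\mathbb R}L_n(s)(\omega)\}$ the set of minimizers of $L_n(\cdot)(\omega)$ (the Fréchet mean set). *)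

theory Defs
  imports "HOL-Probability.Probability"
begin

definition pvii_const :: "real \<Rightarrow> real" where
  "pvii_const m = 1 / (\<integral>x. (1 + x\<^sup>2) powr (-m) \<partial>lborel)"

definition pvii :: "real \<Rightarrow> real measure" where
  "pvii m = density lborel (\<lambda>x. ennreal (pvii_const m * (1 + x\<^sup>2) powr (-m)))"

definition Ln :: "(nat \<Rightarrow> 'a \<Rightarrow> real) \<Rightarrow> nat \<Rightarrow> 'a \<Rightarrow> real \<Rightarrow> real" where
  "Ln X n \<omega> t = (1 / real n) * (\<Sum>i = 1..n. ln (1 + (X i \<omega> - t)\<^sup>2))"

definition frechet_mean_set :: "(nat \<Rightarrow> 'a \<Rightarrow> real) \<Rightarrow> nat \<Rightarrow> 'a \<Rightarrow> real set" where
  "frechet_mean_set X n \<omega> = {t. \<forall>s. Ln X n \<omega> t \<le> Ln X n \<omega> s}"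

end

theory Submission
  imports Defs
begin
lemma term_lo:
  fixes x t :: real
  shows "ln (1 + x\<^sup>2) - (ln 2 + ln (1 + t\<^sup>2)) \<le> ln (1 + (x - t)\<^sup>2)"
proof -
  have e: "2*(x-t)\<^sup>2 + 2*t\<^sup>2 - x\<^sup>2 = (x-2*t)\<^sup>2" by (simp add: power2_eq_square algebra_simps)
  have "0 \<le> (x-2*t)\<^sup>2" by simp
  hence "x\<^sup>2 \<le> 2*(x-t)\<^sup>2 + 2*t\<^sup>2" using e by linarith
  moreover have "0 \<le> t\<^sup>2 * (x-t)\<^sup>2" by simp
  moreover have "2 * (1 + t\<^sup>2) * (1 + (x - t)\<^sup>2) = 2 + 2*t\<^sup>2 + 2*(x-t)\<^sup>2 + 2*(t\<^sup>2 * (x-t)\<^sup>2)" by (simp add: algebra_simps)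
  ultimately have "1 + x\<^sup>2 \<le> 2 * (1 + t\<^sup>2) * (1 + (x - t)\<^sup>2)" by linarith
  hence "ln (1 + x\<^sup>2) \<le> ln (2 * (1 + t\<^sup>2) * (1 + (x - t)\<^sup>2))"
    by (simp add: add_pos_nonneg)
  also have "\<dots> = ln 2 + ln (1 + t\<^sup>2) + ln (1 + (x - t)\<^sup>2)"
  proof -
    have p1: "0 < 1 + t\<^sup>2" "0 < 1 + (x - t)\<^sup>2" by (auto simp: add_pos_nonneg)
    have "ln (2 * (1 + t\<^sup>2) * (1 + (x - t)\<^sup>2)) = ln (2 * (1 + t\<^sup>2)) + ln (1 + (x - t)\<^sup>2)"
      using p1 by (intro ln_mult_pos) auto
    also have "ln (2 * (1 + t\<^sup>2)) = ln 2 + ln (1 + t\<^sup>2)" using p1 by (intro ln_mult_pos) auto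
    finally show ?thesis .
  qed
  finally show ?thesis by simp
qed

lemma term_hi:
  fixes x t K :: real
  assumes "\<bar>x\<bar> \<le> K" "2*K \<le> \<bar>t\<bar>"
  shows "ln (1 + x\<^sup>2) + (ln (1 + (\<bar>t\<bar> - K)\<^sup>2) - ln (1 + K\<^sup>2)) \<le> ln (1 + (x - t)\<^sup>2)"
proof -
  have "\<bar>x\<bar>\<^sup>2 \<le> K\<^sup>2" using assms by (intro power_mono) auto
  hence "x\<^sup>2 \<le> K\<^sup>2" by simp
  hence a: "ln (1 + x\<^sup>2) \<le> ln (1 + K\<^sup>2)" by (subst ln_le_cancel_iff) (auto simp: add_pos_nonneg)
  have "\<bar>t\<bar> - K \<le> \<bar>x - t\<bar>" using assms by linarith
  moreover have "0 \<le> \<bar>t\<bar> - K" using assms by linarith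
  ultimately have "(\<bar>t\<bar> - K)\<^sup>2 \<le> \<bar>x - t\<bar>\<^sup>2"
    by (intro power_mono) auto
  hence "(\<bar>t\<bar> - K)\<^sup>2 \<le> (x - t)\<^sup>2" by simp
  hence "ln (1 + (\<bar>t\<bar> - K)\<^sup>2) \<le> ln (1 + (x - t)\<^sup>2)" by (subst ln_le_cancel_iff) (auto simp: add_pos_nonneg)
  with a show ?thesis by linarith
qed

lemma AB:
  fixes t K :: real
  assumes K: "K \<ge> 0" and t: "\<bar>t\<bar> > 2*K + 128*(1+K\<^sup>2)^3"
  shows "ln 2 + ln (1 + t\<^sup>2) < 3 * (ln (1 + (\<bar>t\<bar> - K)\<^sup>2) - ln (1 + K\<^sup>2))"
    and "0 < ln (1 + (\<bar>t\<bar> - K)\<^sup>2) - ln (1 + K\<^sup>2)"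
proof -
  define c where "c = 1 + K\<^sup>2"
  define a where "a = 1 + (\<bar>t\<bar> - K)\<^sup>2"
  define u where "u = 1 + t\<^sup>2"
  have c1: "c \<ge> 1" unfolding c_def by simp
  have c3: "c^3 \<ge> 1" using c1 by simp
  have tK: "\<bar>t\<bar> - K \<ge> \<bar>t\<bar>/2" proof -
    have "0 \<le> 128*(1+K\<^sup>2)^3" by simp
    thus ?thesis using t by linarith
  qed
  have "(\<bar>t\<bar>/2)\<^sup>2 \<le> (\<bar>t\<bar> - K)\<^sup>2" using tK by (intro power_mono) auto
  hence au: "u / 4 \<le> a" unfolding a_def u_def by (simp add: power_divide)
  have tbig: "\<bar>t\<bar> > 128 * c^3" using t K unfolding c_def by linarith
  have t1: "\<bar>t\<bar> > 1" using tbig c3 by linarith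
  have "\<bar>t\<bar> * 1 \<le> \<bar>t\<bar> * \<bar>t\<bar>" using t1 by (intro mult_left_mono) auto
  hence "t\<^sup>2 \<ge> \<bar>t\<bar>" by (simp add: power2_eq_square)
  hence ubig: "u > 128 * c^3" using tbig unfolding u_def by linarith
  have u1: "u \<ge> 1" unfolding u_def by simp
  have "u^2 \<ge> u" using u1 by (simp add: power2_eq_square)
  hence u2: "u^2 > 128 * c^3" using ubig by linarith
  have "(u/4)^3 \<le> a^3" using au u1 by (intro power_mono) auto
  moreover have "2 * u * c^3 < (u/4)^3"
  proof -
    have "2 * u * c^3 * 64 < u * u^2" proof -
      have "u * (2 * c^3 * 64) < u * u^2" using u2 u1 by (intro mult_strict_left_mono) auto
      thus ?thesis by (simp add: algebra_simps)
    qed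
    thus ?thesis by (simp add: power3_eq_cube power2_eq_square algebra_simps)
  qed
  ultimately have main: "2 * u * c^3 < a^3" by linarith
  have apos: "a > 0" unfolding a_def by (simp add: add_pos_nonneg)
  have cpos: "c > 0" using c1 by simp
  have "ln (2 * u * c^3) < ln (a^3)" using main cpos u1 apos by (subst ln_less_cancel_iff) auto
  hence "ln 2 + ln u + 3 * ln c < 3 * ln a"
    using cpos u1 apos by (simp add: ln_mult ln_realpow)
  thus "ln 2 + ln (1 + t\<^sup>2) < 3 * (ln (1 + (\<bar>t\<bar> - K)\<^sup>2) - ln (1 + K\<^sup>2))"
    unfolding a_def u_def c_def by simp
  have "c < a"
  proof -
    have "c * 1 \<le> c * c^2" using c1 by (intro mult_left_mono) auto
    hence "c \<le> c^3" by (simp add: power3_eq_cube power2_eq_square)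
    moreover have "c^3 \<le> 2 * u * c^3"
    proof -
      have "c^3 * 1 \<le> c^3 * (2*u)" using u1 c3 cpos by (intro mult_left_mono) auto
      thus ?thesis by (simp add: algebra_simps)
    qed
    moreover have "c^3 < a^3" using main \<open>c^3 \<le> 2 * u * c^3\<close> by linarith
    hence "c < a" using apos cpos by (simp add: power_less_imp_less_base)
    ultimately show ?thesis by simp
  qed
  thus "0 < ln (1 + (\<bar>t\<bar> - K)\<^sup>2) - ln (1 + K\<^sup>2)" using cpos unfolding a_def c_def by simp
qed
lemma det_sum:
  fixes x :: "nat \<Rightarrow> real" and K t :: real
  assumes K: "K \<ge> 0" and n: "n \<ge> 1"
    and cnt: "3 * real n < 4 * (\<Sum>i=1..n. indicator {-K..K} (x i))"
    and t: "\<bar>t\<bar> > 2*K + 128*(1+K\<^sup>2)^3"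
  shows "(\<Sum>i=1..n. ln (1 + (x i)\<^sup>2)) < (\<Sum>i=1..n. ln (1 + (x i - t)\<^sup>2))"
proof -
  define A where "A = ln (1 + (\<bar>t\<bar> - K)\<^sup>2) - ln (1 + K\<^sup>2)"
  define B where "B = ln 2 + ln (1 + t\<^sup>2)"
  define c where "c = (\<Sum>i=1..n. indicator {-K..K} (x i) :: real)"
  have BA: "B < 3 * A" and A0: "0 < A" using AB[OF K t] unfolding A_def B_def by auto
  have B0: "0 < B" proof -
    have "0 < ln (2::real)" by simp
    moreover have "0 \<le> ln (1 + t\<^sup>2)" by (intro ln_ge_zero) simp
    ultimately show ?thesis unfolding B_def by linarith
  qed
  have tK: "2*K \<le> \<bar>t\<bar>"
  proof -
    have "0 \<le> 128*(1+K\<^sup>2)^3" by simp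
    thus ?thesis using t by linarith
  qed
  have trm: "ln (1 + (x i)\<^sup>2) + (indicator {-K..K} (x i) * A - (1 - indicator {-K..K} (x i)) * B)
      \<le> ln (1 + (x i - t)\<^sup>2)" for i
  proof (cases "x i \<in> {-K..K}")
    case True
    hence "\<bar>x i\<bar> \<le> K" by auto
    from term_hi[OF this tK] True show ?thesis unfolding A_def by simp
  next
    case False
    from term_lo[of "x i" t] False show ?thesis unfolding B_def by simp
  qed
  have "(\<Sum>i=1..n. ln (1 + (x i)\<^sup>2) + (indicator {-K..K} (x i) * A - (1 - indicator {-K..K} (x i)) * B))
     \<le> (\<Sum>i=1..n. ln (1 + (x i - t)\<^sup>2))"
    by (intro sum_mono trm)
  moreover have "(\<Sum>i=1..n. ln (1 + (x i)\<^sup>2) + (indicator {-K..K} (x i) * A - (1 - indicator {-K..K} (x i)) * B))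
     = (\<Sum>i=1..n. ln (1 + (x i)\<^sup>2)) + (c * A - (real n - c) * B)"
  proof -
    define I where "I = (\<lambda>i. indicator {-K..K} (x i) :: real)"
    have e1: "(\<Sum>i=1..n. ln (1 + (x i)\<^sup>2) + (I i * A - (1 - I i) * B))
       = (\<Sum>i=1..n. ln (1 + (x i)\<^sup>2)) + ((\<Sum>i=1..n. I i) * A - ((\<Sum>i=1..n. (1::real)) - (\<Sum>i=1..n. I i)) * B)"
      by (simp only: sum.distrib sum_subtractf sum_distrib_right[symmetric])
    have e2: "(\<Sum>i=1..n. (1::real)) = real n" by simp
    show ?thesis using e1 unfolding c_def I_def e2 .
  qed
  moreover have "0 < c * A - (real n - c) * B"
  proof -
    have c0: "c > 0" using cnt n unfolding c_def by linarith
    have "(real n - c) * B \<le> (c/3) * B" using cnt B0 unfolding c_def by (intro mult_right_mono) auto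
    moreover have "(c/3) * B < (c/3) * (3*A)" using c0 BA by (intro mult_strict_left_mono) auto
    ultimately show ?thesis by simp
  qed
  ultimately show ?thesis by linarith
qed


lemma eventually_count:
  fixes M :: "'a measure" and X :: "nat \<Rightarrow> 'a \<Rightarrow> real" and K :: real and Q :: "real measure"
  assumes P: "prob_space M" and ind: "prob_space.indep_vars M (\<lambda>_. borel) X {1..}"
    and dist: "\<forall>i\<ge>1. distr M borel (X i) = Q"
    and q: "measure Q {-K..K} \<ge> 7/8"
  shows "AE \<omega> in M. \<exists>N. \<forall>n>N. 3 * real n < 4 * (\<Sum>i=1..n. indicator {-K..K} (X i \<omega>))"
proof -
  interpret prob_space M by fact
  define Y where "Y i \<omega> = (indicator {-K..K} (X i \<omega>) :: real)" for i \<omega>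
  have Xm: "X i \<in> borel_measurable M" if "i \<ge> 1" for i
    using ind that unfolding indep_vars_def by auto
  have im: "(indicator {-K..K} :: real \<Rightarrow> real) \<in> borel_measurable borel" by simp
  have Ym: "Y i \<in> borel_measurable M" if "i \<ge> 1" for i
    unfolding Y_def using measurable_compose[OF Xm[OF that] im] by (simp add: o_def)
  have indY: "indep_vars (\<lambda>_. borel) Y {1..}"
    unfolding Y_def using indep_vars_compose2[OF ind, of "\<lambda>_. indicator {-K..K}" "\<lambda>_. borel"] im by auto
  have dY: "distr M borel (Y i) = distr Q borel (indicator {-K..K} :: real \<Rightarrow> real)" if "i \<ge> 1" for i
  proof -
    have "distr (distr M borel (X i)) borel (indicator {-K..K} :: real \<Rightarrow> real) = distr M borel ((indicator {-K..K} :: real \<Rightarrow> real) \<circ> X i)"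
      by (rule distr_distr[OF im Xm[OF that]])
    thus ?thesis using dist that unfolding Y_def by (simp add: o_def)
  qed
  define \<mu> where "\<mu> = expectation (Y 1)"
  have \<mu>: "\<mu> = measure Q {-K..K}"
  proof -
    have "\<mu> = integral\<^sup>L (distr M borel (X 1)) (indicator {-K..K} :: real \<Rightarrow> real)"
      unfolding \<mu>_def Y_def by (rule integral_distr[symmetric, OF Xm im]) simp
    also have "\<dots> = integral\<^sup>L Q (indicator {-K..K})" using dist by simp
    also have "\<dots> = measure Q ({-K..K} \<inter> space Q)" by (rule Bochner_Integration.integral_indicator)
    also have "space Q = UNIV" using dist by (metis order_refl space_borel space_distr)
    finally show ?thesis by simp
  qed
  define A where "A n = {\<omega> \<in> space M. (\<Sum>i\<in>{1..n}. Y i \<omega>) \<le> real (card {1..n}) * \<mu> - real n / 8}" for n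
  have sm: "(\<lambda>\<omega>. \<Sum>i\<in>{1..n}. Y i \<omega>) \<in> borel_measurable M" for n
    by (rule borel_measurable_sum) (use Ym in auto)
  have Am: "A n \<in> events" for n
    unfolding A_def using sm[of n] by measurable
  have Ab: "prob (A n) \<le> exp (-1/32) ^ n" for n
  proof (cases "n = 0")
    case True thus ?thesis by simp
  next
    case False
    have H: "Hoeffding_ineq_iid M {1..n} Y (Y 1) 0 1"
      unfolding Hoeffding_ineq_iid_def iid_interval_bounded_random_variables_def
        iid_interval_bounded_random_variables_axioms_def
    proof (intro conjI allI impI)
      show "prob_space M" by fact
      show "finite {1..n}" by simp
      show "indep_vars (\<lambda>_. borel) Y {1..n}" by (rule indep_vars_subset[OF indY]) auto
      show "distr M borel (Y i) = distr M borel (Y 1)" if "i \<in> {1..n}" for i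
        using dY[of i] dY[of 1] that by simp
      show "Y 1 \<in> borel_measurable M" using Ym by simp
      show "AE x in M. Y 1 x \<in> {0..1}" unfolding Y_def by (simp add: indicator_def)
    qed
    have "prob {x\<in>space M. (\<Sum>i\<in>{1..n}. Y i x) \<le> real (card {1..n}) * expectation (Y 1) - real n / 8}
          \<le> exp (- 2 * (real n / 8)\<^sup>2 / (real (card {1..n}) * (1 - 0)\<^sup>2))"
      by (rule Hoeffding_ineq_iid.Hoeffding_ineq_le[OF H]) (use False in auto)
    also have "- 2 * (real n / 8)\<^sup>2 / (real (card {1..n}) * (1 - 0)\<^sup>2) = real n * (-1/32)"
      using False by (simp add: power2_eq_square field_simps)
    also have "exp (real n * (-1/32)) = exp (-1/32) ^ n" by (rule exp_of_nat_mult)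
    finally show ?thesis unfolding A_def \<mu>_def .
  qed
  have summ: "summable (\<lambda>n. measure M (A n))"
  proof (rule summable_comparison_test)
    show "\<exists>N. \<forall>n\<ge>N. norm (measure M (A n)) \<le> exp (-1/32) ^ n" using Ab by auto
    show "summable (\<lambda>n. exp (-1/32::real) ^ n)" by (rule summable_geometric) simp
  qed
  have "AE x in M. \<forall>\<^sub>F n in sequentially. x \<in> space M - A n"
    by (rule borel_cantelli_AE1[OF Am _ summ]) (simp add: less_top[symmetric])
  thus ?thesis
  proof (rule eventually_mono)
    fix \<omega> assume "\<forall>\<^sub>F n in sequentially. \<omega> \<in> space M - A n"
    then obtain N where N: "\<And>n. n \<ge> N \<Longrightarrow> \<omega> \<in> space M - A n" by (auto simp: eventually_sequentially)
    show "\<exists>N. \<forall>n>N. 3 * real n < 4 * (\<Sum>i=1..n. indicator {-K..K} (X i \<omega>))"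
    proof (intro exI allI impI)
      fix n assume "n > N"
      hence "\<omega> \<in> space M - A n" using N[of n] by simp
      hence "(\<Sum>i\<in>{1..n}. Y i \<omega>) > real n * \<mu> - real n / 8" unfolding A_def by auto
      moreover have "real n * \<mu> \<ge> real n * (7/8)" using q \<mu> by (intro mult_left_mono) auto
      moreover have "real n > 0" using \<open>n > N\<close> by simp
      ultimately show "3 * real n < 4 * (\<Sum>i=1..n. indicator {-K..K} (X i \<omega>))"
        unfolding Y_def by linarith
    qed
  qed
qed

theorem lemma2p2:
  fixes m :: real
  assumes "m > 1/2"
  shows "\<exists>r>0. \<forall>(M :: 'a measure) (X :: nat \<Rightarrow> 'a \<Rightarrow> real).
           prob_space M \<and> prob_space.indep_vars M (\<lambda>_. borel) X {1..} \<and>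
           (\<forall>i\<ge>1. distr M borel (X i) = pvii m)
           \<longrightarrow> (AE \<omega> in M. \<exists>N2. \<forall>n>N2. frechet_mean_set X n \<omega> \<subseteq> {-r..r})"
proof (cases "prob_space (pvii m)")
  case False
  show ?thesis
  proof (intro exI[of _ 1] conjI allI impI)
    fix M :: "'a measure" and X :: "nat \<Rightarrow> 'a \<Rightarrow> real"
    assume h: "prob_space M \<and> prob_space.indep_vars M (\<lambda>_. borel) X {1..} \<and>
           (\<forall>i\<ge>1. distr M borel (X i) = pvii m)"
    hence "X 1 \<in> borel_measurable M" by (auto simp: prob_space.indep_vars_def)
    hence "prob_space (distr M borel (X 1))" using h by (intro prob_space.prob_space_distr) auto
    moreover have "distr M borel (X 1) = pvii m" using h by simp
    ultimately have "prob_space (pvii m)" by simp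
    with False show "AE \<omega> in M. \<exists>N2. \<forall>n>N2. frechet_mean_set X n \<omega> \<subseteq> {-1..1}" by blast
  qed simp
next
  case True
  define Q where "Q = pvii m"
  have spQ: "space Q = UNIV" unfolding Q_def pvii_def by (simp only: space_density space_lborel space_borel)
  have sQ: "sets Q = sets borel" unfolding Q_def pvii_def by (simp only: sets_density sets_lborel)
  have "(\<lambda>k. measure Q {-real k..real k}) \<longlonglongrightarrow> measure Q (\<Union>k. {-real k..real k})"
  proof (rule finite_measure.finite_Lim_measure_incseq)
    show "finite_measure Q" using True unfolding Q_def by (auto simp: prob_space_def)
    have "{-real k..real k} \<in> sets Q" for k unfolding sQ by (rule borel_closed) (rule closed_atLeastAtMost)
    thus "range (\<lambda>k. {-real k..real k}) \<subseteq> sets Q" by blast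
    show "incseq (\<lambda>k. {-real k..real k})"
    proof (rule incseq_SucI)
      fix k :: nat show "{-real k..real k} \<subseteq> {-real (Suc k)..real (Suc k)}" by auto
    qed
  qed
  moreover have "(\<Union>k. {-real k..real k}) = space Q"
  proof -
    have "x \<in> (\<Union>k. {-real k..real k})" for x :: real
    proof -
      obtain k :: nat where "\<bar>x\<bar> \<le> real k" using real_arch_simple by blast
      hence "x \<in> {-real k..real k}" by auto
      thus ?thesis by blast
    qed
    thus ?thesis using spQ by auto
  qed
  moreover have "measure Q (space Q) = 1" using True unfolding Q_def by (rule prob_space.prob_space)
  ultimately have "(\<lambda>k. measure Q {-real k..real k}) \<longlonglongrightarrow> 1" by simp
  hence "\<forall>\<^sub>F k in sequentially. measure Q {-real k..real k} > 7/8"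
    by (rule order_tendstoD) simp
  then obtain k :: nat where k: "measure Q {-real k..real k} > 7/8"
    by (auto simp: eventually_sequentially)
  define K where "K = real k"
  have K0: "K \<ge> 0" unfolding K_def by simp
  define r where "r = 2*K + 128*(1+K\<^sup>2)^3"
  have r0: "r > 0"
  proof -
    have "(1::real) \<le> (1+K\<^sup>2)^3" by simp
    thus ?thesis unfolding r_def using K0 by linarith
  qed
  show ?thesis
  proof (intro exI[of _ r] conjI allI impI)
    show "r > 0" by (rule r0)
    fix M :: "'a measure" and X :: "nat \<Rightarrow> 'a \<Rightarrow> real"
    assume h: "prob_space M \<and> prob_space.indep_vars M (\<lambda>_. borel) X {1..} \<and>
           (\<forall>i\<ge>1. distr M borel (X i) = pvii m)"
    have "AE \<omega> in M. \<exists>N. \<forall>n>N. 3 * real n < 4 * (\<Sum>i=1..n. indicator {-K..K} (X i \<omega>))"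
    proof (rule eventually_count)
      show "prob_space M" using h by blast
      show "prob_space.indep_vars M (\<lambda>_. borel) X {1..}" using h by blast
      show "\<forall>i\<ge>1. distr M borel (X i) = Q" using h unfolding Q_def by blast
      show "measure Q {-K..K} \<ge> 7/8" using k unfolding K_def by linarith
    qed
    thus "AE \<omega> in M. \<exists>N2. \<forall>n>N2. frechet_mean_set X n \<omega> \<subseteq> {-r..r}"
    proof (rule eventually_mono)
      fix \<omega> assume "\<exists>N. \<forall>n>N. 3 * real n < 4 * (\<Sum>i=1..n. indicator {-K..K} (X i \<omega>))"
      then obtain N where N: "\<And>n. n > N \<Longrightarrow> 3 * real n < 4 * (\<Sum>i=1..n. indicator {-K..K} (X i \<omega>))"
        by blast
      show "\<exists>N2. \<forall>n>N2. frechet_mean_set X n \<omega> \<subseteq> {-r..r}"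
      proof (intro exI[of _ N] allI impI subsetI)
        fix n t assume n: "n > N" and t: "t \<in> frechet_mean_set X n \<omega>"
        show "t \<in> {-r..r}"
        proof (rule ccontr)
          assume "t \<notin> {-r..r}"
          hence tr: "\<bar>t\<bar> > 2*K + 128*(1+K\<^sup>2)^3" unfolding r_def by auto
          have n1: "n \<ge> 1" using n by simp
          have lt: "(\<Sum>i=1..n. ln (1 + (X i \<omega>)\<^sup>2)) < (\<Sum>i=1..n. ln (1 + (X i \<omega> - t)\<^sup>2))"
            by (rule det_sum[OF K0 n1 N[OF n] tr])
          have np: "0 < 1 / real n" using n1 by simp
          have "Ln X n \<omega> 0 < Ln X n \<omega> t"
            unfolding Ln_def using mult_strict_left_mono[OF lt np] by simp
          moreover have "Ln X n \<omega> t \<le> Ln X n \<omega> 0" using t unfolding frechet_mean_set_def by auto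
          ultimately show False by simp
        qed
      qed
    qed
  qed
qed

end
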